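(* If $Q$ is a Jordan loop and $x\in Q$, then $(x^{2^n})^{-1}=(x^{-1})^{2^n}$ for every integer $n\ge 0$.
   Context: A loop is a set $Q$ with a binary operation (juxtaposition) and neutral element $e$ such that for all $a,b$ the equations $ax=b$, $ya=b$ have unique solutions. A Jordan loop is a commutative loop satisfying $x^2(yx)=(x^2y)x$. For $y\in Q$ and $k\ge 0$, $y^k$ denotes the right-associated product $y(y(\cdots(ye)\cdots))$ with $k$ factors $y$. Since the loop is commutative, each $x$ has a unique inverse $x^{-1}$ with $xx^{-1}=x^{-1}x=e$. *)

theory Defs
  imports Main
begin

definition loop :: "'a set \<Rightarrow> ('a \<Rightarrow> 'a \<Rightarrow> 'a) \<Rightarrow> 'a \<Rightarrow> bool" where
  "loop Q m e \<longleftrightarrow>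
     e \<in> Q \<and>
     (\<forall>a\<in>Q. \<forall>b\<in>Q. m a b \<in> Q) \<and>
     (\<forall>a\<in>Q. m e a = a \<and> m a e = a) \<and>
     (\<forall>a\<in>Q. \<forall>b\<in>Q. \<exists>!x. x \<in> Q \<and> m a x = b) \<and>
     (\<forall>a\<in>Q. \<forall>b\<in>Q. \<exists>!y. y \<in> Q \<and> m y a = b)"

definition jordan_loop :: "'a set \<Rightarrow> ('a \<Rightarrow> 'a \<Rightarrow> 'a) \<Rightarrow> 'a \<Rightarrow> bool" where
  "jordan_loop Q m e \<longleftrightarrow>
     loop Q m e \<and>
     (\<forall>a\<in>Q. \<forall>b\<in>Q. m a b = m b a) \<and>
     (\<forall>x\<in>Q. \<forall>y\<in>Q. m (m x x) (m y x) = m (m (m x x) y) x)"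

primrec lpow :: "('a \<Rightarrow> 'a \<Rightarrow> 'a) \<Rightarrow> 'a \<Rightarrow> 'a \<Rightarrow> nat \<Rightarrow> 'a" where
  "lpow m e y 0 = e"
| "lpow m e y (Suc k) = m y (lpow m e y k)"

definition linv :: "'a set \<Rightarrow> ('a \<Rightarrow> 'a \<Rightarrow> 'a) \<Rightarrow> 'a \<Rightarrow> 'a \<Rightarrow> 'a" where
  "linv Q m e x = (THE z. z \<in> Q \<and> m x z = e \<and> m z x = e)"

end

theory Submission
  imports Defs
begin

lemma J_facts:
  assumes J: "jordan_loop Q m e"
  shows "e \<in> Q" "\<And>a b. a \<in> Q \<Longrightarrow> b \<in> Q \<Longrightarrow> m a b \<in> Q"
    "\<And>a. a \<in> Q \<Longrightarrow> m e a = a" "\<And>a. a \<in> Q \<Longrightarrow> m a e = a"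
    "\<And>a b. a \<in> Q \<Longrightarrow> b \<in> Q \<Longrightarrow> m a b = m b a"
    "\<And>x y. x \<in> Q \<Longrightarrow> y \<in> Q \<Longrightarrow> m (m x x) (m y x) = m (m (m x x) y) x"
    "\<And>a y1 y2. a \<in> Q \<Longrightarrow> y1 \<in> Q \<Longrightarrow> y2 \<in> Q \<Longrightarrow> m y1 a = m y2 a \<Longrightarrow> y1 = y2"
    "\<And>a. a \<in> Q \<Longrightarrow> \<exists>z\<in>Q. m a z = e"
proof -
  have LL: "loop Q m e \<and> (\<forall>a\<in>Q. \<forall>b\<in>Q. m a b = m b a) \<and>
     (\<forall>x\<in>Q. \<forall>y\<in>Q. m (m x x) (m y x) = m (m (m x x) y) x)"
    using J unfolding jordan_loop_def .
  note L = conjunct1[OF LL] and C = conjunct1[OF conjunct2[OF LL]] and JJ = conjunct2[OF conjunct2[OF LL]]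
  have LD: "e \<in> Q \<and>
     (\<forall>a\<in>Q. \<forall>b\<in>Q. m a b \<in> Q) \<and>
     (\<forall>a\<in>Q. m e a = a \<and> m a e = a) \<and>
     (\<forall>a\<in>Q. \<forall>b\<in>Q. \<exists>!x. x \<in> Q \<and> m a x = b) \<and>
     (\<forall>a\<in>Q. \<forall>b\<in>Q. \<exists>!y. y \<in> Q \<and> m y a = b)"
    using L unfolding loop_def .
  note L1 = conjunct1[OF LD] and L2 = conjunct1[OF conjunct2[OF LD]]
    and L3 = conjunct1[OF conjunct2[OF conjunct2[OF LD]]]
    and L4 = conjunct1[OF conjunct2[OF conjunct2[OF conjunct2[OF LD]]]]
    and L5 = conjunct2[OF conjunct2[OF conjunct2[OF conjunct2[OF LD]]]]
  show "e \<in> Q" by (rule L1)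
  show "\<And>a b. a \<in> Q \<Longrightarrow> b \<in> Q \<Longrightarrow> m a b \<in> Q" using L2 by simp
  show "\<And>a. a \<in> Q \<Longrightarrow> m e a = a" using L3 by simp
  show "\<And>a. a \<in> Q \<Longrightarrow> m a e = a" using L3 by simp
  show "\<And>a b. a \<in> Q \<Longrightarrow> b \<in> Q \<Longrightarrow> m a b = m b a" using C by simp
  show "\<And>x y. x \<in> Q \<Longrightarrow> y \<in> Q \<Longrightarrow> m (m x x) (m y x) = m (m (m x x) y) x"
    using JJ by simp
  show "\<And>a y1 y2. a \<in> Q \<Longrightarrow> y1 \<in> Q \<Longrightarrow> y2 \<in> Q \<Longrightarrow> m y1 a = m y2 a \<Longrightarrow> y1 = y2"
  proof -
    fix a y1 y2 assume a: "a \<in> Q" "y1 \<in> Q" "y2 \<in> Q" "m y1 a = m y2 a"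
    have "m y1 a \<in> Q" using L2 a by simp
    then have U: "\<exists>!y. y \<in> Q \<and> m y a = m y1 a" using L5 a(1) by simp
    obtain y where "y \<in> Q \<and> m y a = m y1 a" and Y: "\<And>y'. y' \<in> Q \<and> m y' a = m y1 a \<Longrightarrow> y' = y"
      using U by (rule ex1E) blast
    have "y1 = y" by (rule Y) (simp add: a(2))
    moreover have "y2 = y" by (rule Y) (simp add: a(3,4))
    ultimately show "y1 = y2" by simp
  qed
  show "\<And>a. a \<in> Q \<Longrightarrow> \<exists>z\<in>Q. m a z = e"
  proof -
    fix a assume "a \<in> Q"
    then have U: "\<exists>!x. x \<in> Q \<and> m a x = e" using L4 L1 by simp
    then obtain z where "z \<in> Q \<and> m a z = e" by (rule ex1E)
    then show "\<exists>z\<in>Q. m a z = e" by (rule conjE) (rule bexI)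
  qed
qed

lemma linv_eq:
  assumes J: "jordan_loop Q m e" and x: "x \<in> Q" and z: "z \<in> Q" "m x z = e"
  shows "linv Q m e x = z"
  unfolding linv_def
proof (rule the_equality)
  show "z \<in> Q \<and> m x z = e \<and> m z x = e" using z J_facts(5)[OF J x z(1)] by simp
  fix w assume w: "w \<in> Q \<and> m x w = e \<and> m w x = e"
  then have "m w x = m z x" using z J_facts(5)[OF J x z(1)] by simp
  then show "w = z" using J_facts(7)[OF J] x z w by blast
qed

lemma linv_props:
  assumes J: "jordan_loop Q m e" and x: "x \<in> Q"
  shows "linv Q m e x \<in> Q" "m x (linv Q m e x) = e" "m (linv Q m e x) x = e"
proof -
  obtain z where z: "z \<in> Q" "m x z = e" using J_facts(8)[OF J x] by blast
  have "linv Q m e x = z" by (rule linv_eq[OF J x z])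
  then show "linv Q m e x \<in> Q" "m x (linv Q m e x) = e" "m (linv Q m e x) x = e"
    using z J_facts(5)[OF J x z(1)] by simp_all
qed

lemma lpow_in:
  assumes J: "jordan_loop Q m e" and x: "x \<in> Q"
  shows "lpow m e x k \<in> Q"
  by (induction k) (auto simp: J_facts(1,2)[OF J] x)

lemma F:
  assumes J: "jordan_loop Q m e" and u: "u \<in> Q" and v: "v \<in> Q" "m v u = e"
  shows "m (m (m u u) v) u = m u u" "m (m u u) v = u"
proof -
  have uu: "m u u \<in> Q" using J_facts(2)[OF J] u by blast
  have "m (m u u) (m v u) = m (m (m u u) v) u" using J_facts(6)[OF J u v(1)] .
  then show 1: "m (m (m u u) v) u = m u u" using v J_facts(4)[OF J uu] by simp
  show "m (m u u) v = u"
    using J_facts(7)[OF J u _ u 1] J_facts(2)[OF J uu v(1)] by blast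
qed

lemma sq_inv:
  assumes J: "jordan_loop Q m e" and x: "x \<in> Q"
  shows "linv Q m e (m x x) = m (linv Q m e x) (linv Q m e x)"
proof -
  define a where "a = linv Q m e x"
  have a: "a \<in> Q" "m x a = e" "m a x = e" using linv_props[OF J x] a_def by auto
  have xx: "m x x \<in> Q" and aa: "m a a \<in> Q" using J_facts(2)[OF J] x a by auto
  have "m (m a a) (m (m x x) a) = m (m (m a a) (m x x)) a" using J_facts(6)[OF J a(1) xx] .
  moreover have "m (m x x) a = x" using F(2)[OF J x a(1) a(3)] .
  moreover have "m (m a a) x = a" using F(2)[OF J a(1) x a(2)] .
  ultimately have "m (m (m a a) (m x x)) a = m e a" using J_facts(3)[OF J a(1)] by simp
  then have "m (m a a) (m x x) = e"
    using J_facts(7)[OF J a(1) _ J_facts(1)[OF J]] J_facts(2)[OF J aa xx] by blast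
  then have "m (m x x) (m a a) = e" using J_facts(5)[OF J aa xx] by simp
  then show ?thesis using linv_eq[OF J xx aa] a_def by simp
qed

lemma A:
  assumes J: "jordan_loop Q m e" and x: "x \<in> Q"
  shows "m (m x x) (lpow m e x j) = lpow m e x (j + 2)"
proof (induction j)
  case 0
  then show ?case using J_facts(4)[OF J] J_facts(2)[OF J] x by simp
next
  case (Suc j)
  have p: "lpow m e x j \<in> Q" using lpow_in[OF J x] .
  have xx: "m x x \<in> Q" using J_facts(2)[OF J x x] .
  have "m (m x x) (m x (lpow m e x j)) = m (m x x) (m (lpow m e x j) x)"
    using J_facts(5)[OF J x p] by simp
  also have "\<dots> = m (m (m x x) (lpow m e x j)) x" using J_facts(6)[OF J x p] .
  also have "\<dots> = m x (m (m x x) (lpow m e x j))"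
    using J_facts(5)[OF J J_facts(2)[OF J xx p] x] by simp
  finally show ?case using Suc by simp
qed

lemma B:
  assumes J: "jordan_loop Q m e" and x: "x \<in> Q"
  shows "lpow m e x (2 * k) = lpow m e (m x x) k"
proof (induction k)
  case 0
  then show ?case by simp
next
  case (Suc k)
  have "lpow m e x (2 * Suc k) = lpow m e x (2 * k + 2)" by simp
  also have "\<dots> = m (m x x) (lpow m e x (2 * k))" using A[OF J x] by simp
  finally show ?case using Suc by simp
qed

lemma main:
  assumes J: "jordan_loop Q m e"
  shows "x \<in> Q \<Longrightarrow> linv Q m e (lpow m e x (2 ^ n)) = lpow m e (linv Q m e x) (2 ^ n)"
proof (induction n arbitrary: x)
  case 0
  have "linv Q m e x \<in> Q" using linv_props[OF J 0] by blast
  then show ?case using J_facts(4)[OF J] 0 by simp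
next
  case (Suc n)
  have xx: "m x x \<in> Q" using J_facts(2)[OF J Suc.prems Suc.prems] .
  have ai: "linv Q m e x \<in> Q" using linv_props[OF J Suc.prems] by blast
  have "linv Q m e (lpow m e x (2 ^ Suc n)) = linv Q m e (lpow m e (m x x) (2 ^ n))"
    using B[OF J Suc.prems] by simp
  also have "\<dots> = lpow m e (linv Q m e (m x x)) (2 ^ n)" using Suc.IH[OF xx] .
  also have "\<dots> = lpow m e (m (linv Q m e x) (linv Q m e x)) (2 ^ n)"
    using sq_inv[OF J Suc.prems] by simp
  also have "\<dots> = lpow m e (linv Q m e x) (2 ^ Suc n)"
    using B[OF J ai] by simp
  finally show ?case .
qed

theorem lemma2p6:
  fixes Q :: "'a set" and m :: "'a \<Rightarrow> 'a \<Rightarrow> 'a" and e x :: 'a and n :: nat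
  assumes "jordan_loop Q m e" and "x \<in> Q"
  shows "linv Q m e (lpow m e x (2 ^ n)) = lpow m e (linv Q m e x) (2 ^ n)"
  using main[OF assms(1) assms(2)] .

end
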